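(* Let $G$ be a connected graph of order $n\geq 2$. The following are pairwise equivalent: (i) $\mathrm{ldim}_f(G)=\frac{n}{2}$; (ii) every vertex of $G$ has a true twin, i.e. for every $u\in V(G)$ there is $v\neq u$ with $N[u]=N[v]$; (iii) there exist a graph $H$ and a family $\mathcal I=\{I_v\}_{v\in V(H)}$ of complete graphs each of order at least $2$ such that $G$ is isomorphic to the generalized lexicographic product $H[\mathcal I]$.
   Context: All graphs are finite, simple and connected; $d(x,y)$ is the shortest-path distance. For an edge $uv$, $L(uv)=\{x\in V(G): d(u,x)\neq d(v,x)\}$. A function $f:V(G)\to[0,1]$ is a local resolving function of $G$ if $\sum_{x\in L(uv)}f(x)\geq 1$ for every edge $uv$; $\mathrm{ldim}_f(G)$ is the minimum of $\sum_{v\in V(G)}f(v)$ over all local resolving functions. $N[u]$ is the closed neighborhood of $u$. Given a graph $H$ and graphs $I_v$ indexed by $v\in V(H)$, the generalized lexicographic product $H[\mathcal I]$ has vertex set $\{(v,w): v\in V(H), w\in V(I_v)\}$, with $(v_1,w_1)(v_2,w_2)$ an edge iff $v_1v_2\in E(H)$, or $v_1=v_2$ and $w_1w_2\in E(I_{v_1})$. *)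

theory Defs
  imports Complex_Main
begin

definition simple_graph :: "'a set \<Rightarrow> ('a \<Rightarrow> 'a \<Rightarrow> bool) \<Rightarrow> bool" where
  "simple_graph V E \<longleftrightarrow> finite V \<and> (\<forall>x y. E x y \<longrightarrow> x \<in> V \<and> y \<in> V)
     \<and> (\<forall>x y. E x y \<longrightarrow> E y x) \<and> (\<forall>x. \<not> E x x)"

definition walk :: "'a set \<Rightarrow> ('a \<Rightarrow> 'a \<Rightarrow> bool) \<Rightarrow> nat \<Rightarrow> 'a \<Rightarrow> 'a \<Rightarrow> bool" where
  "walk V E n x y \<longleftrightarrow> (\<exists>p. length p = Suc n \<and> hd p = x \<and> last p = y \<and> set p \<subseteq> V
      \<and> (\<forall>i<n. E (p ! i) (p ! Suc i)))"

definition connected_graph :: "'a set \<Rightarrow> ('a \<Rightarrow> 'a \<Rightarrow> bool) \<Rightarrow> bool" where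
  "connected_graph V E \<longleftrightarrow> simple_graph V E \<and> V \<noteq> {}
     \<and> (\<forall>x\<in>V. \<forall>y\<in>V. \<exists>n. walk V E n x y)"

definition gdist :: "'a set \<Rightarrow> ('a \<Rightarrow> 'a \<Rightarrow> bool) \<Rightarrow> 'a \<Rightarrow> 'a \<Rightarrow> nat" where
  "gdist V E x y = (LEAST n. walk V E n x y)"

definition Lset :: "'a set \<Rightarrow> ('a \<Rightarrow> 'a \<Rightarrow> bool) \<Rightarrow> 'a \<Rightarrow> 'a \<Rightarrow> 'a set" where
  "Lset V E u v = {x \<in> V. gdist V E u x \<noteq> gdist V E v x}"

definition local_resolving_function ::
  "'a set \<Rightarrow> ('a \<Rightarrow> 'a \<Rightarrow> bool) \<Rightarrow> ('a \<Rightarrow> real) \<Rightarrow> bool" where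
  "local_resolving_function V E f \<longleftrightarrow> (\<forall>x\<in>V. 0 \<le> f x \<and> f x \<le> 1)
     \<and> (\<forall>u v. E u v \<longrightarrow> (\<Sum>x\<in>Lset V E u v. f x) \<ge> 1)"

text \<open>fractional local metric dimension: the minimum (here Inf, which is attained)
  of the total weight over all local resolving functions\<close>
definition ldim_f :: "'a set \<Rightarrow> ('a \<Rightarrow> 'a \<Rightarrow> bool) \<Rightarrow> real" where
  "ldim_f V E = Inf {(\<Sum>v\<in>V. f v) | f. local_resolving_function V E f}"

definition closed_nbhd :: "'a set \<Rightarrow> ('a \<Rightarrow> 'a \<Rightarrow> bool) \<Rightarrow> 'a \<Rightarrow> 'a set" where
  "closed_nbhd V E u = insert u {v \<in> V. E u v}"

definition complete_graph :: "'a set \<Rightarrow> ('a \<Rightarrow> 'a \<Rightarrow> bool) \<Rightarrow> bool" where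
  "complete_graph V E \<longleftrightarrow> simple_graph V E \<and> (\<forall>x\<in>V. \<forall>y\<in>V. x \<noteq> y \<longrightarrow> E x y)"

text \<open>generalized lexicographic product H[I]; I v = (vertex set, adjacency) of I_v\<close>
definition glex_verts :: "'b set \<Rightarrow> ('b \<Rightarrow> 'c set \<times> ('c \<Rightarrow> 'c \<Rightarrow> bool)) \<Rightarrow> ('b \<times> 'c) set" where
  "glex_verts VH I = {(v, w). v \<in> VH \<and> w \<in> fst (I v)}"

definition glex_edge :: "'b set \<Rightarrow> ('b \<Rightarrow> 'b \<Rightarrow> bool) \<Rightarrow> ('b \<Rightarrow> 'c set \<times> ('c \<Rightarrow> 'c \<Rightarrow> bool))
    \<Rightarrow> 'b \<times> 'c \<Rightarrow> 'b \<times> 'c \<Rightarrow> bool" where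
  "glex_edge VH EH I p q \<longleftrightarrow> p \<in> glex_verts VH I \<and> q \<in> glex_verts VH I \<and>
     (EH (fst p) (fst q) \<or> (fst p = fst q \<and> snd (I (fst p)) (snd p) (snd q)))"

definition graph_iso :: "'a set \<Rightarrow> ('a \<Rightarrow> 'a \<Rightarrow> bool) \<Rightarrow> 'b set \<Rightarrow> ('b \<Rightarrow> 'b \<Rightarrow> bool) \<Rightarrow> bool" where
  "graph_iso V E V' E' \<longleftrightarrow> (\<exists>\<phi>. bij_betw \<phi> V V' \<and> (\<forall>x\<in>V. \<forall>y\<in>V. E x y \<longleftrightarrow> E' (\<phi> x) (\<phi> y)))"

end

theory Submission
  imports Defs
begin


lemma walk_0: "walk V E 0 x y \<longleftrightarrow> x = y \<and> x \<in> V"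
proof
  assume "walk V E 0 x y"
  then obtain p where "length p = Suc 0" "hd p = x" "last p = y" "set p \<subseteq> V"
    unfolding walk_def by auto
  then show "x = y \<and> x \<in> V" by (auto simp: length_Suc_conv)
next
  assume "x = y \<and> x \<in> V"
  then show "walk V E 0 x y" unfolding walk_def by (intro exI[of _ "[x]"]) auto
qed

lemma walk_Suc:
  assumes sg: "simple_graph V E"
  shows "walk V E (Suc n) x y \<longleftrightarrow> (\<exists>z. E x z \<and> walk V E n z y)"
proof
  assume "walk V E (Suc n) x y"
  then obtain p where p: "length p = Suc (Suc n)" "hd p = x" "last p = y" "set p \<subseteq> V"
    "\<forall>i<Suc n. E (p ! i) (p ! Suc i)"
    unfolding walk_def by blast
  obtain a q where pq: "p = a # q" using p(1) by (cases p) auto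
  have q: "length q = Suc n" using p(1) pq by simp
  then have qne: "q \<noteq> []" by auto
  have "E x (hd q)" using p(5)[rule_format, of 0] pq p(2) qne by (simp add: hd_conv_nth)
  moreover have "walk V E n (hd q) y"
    unfolding walk_def
  proof (intro exI[of _ q] conjI allI impI)
    show "last q = y" using p(3) pq qne by simp
    show "set q \<subseteq> V" using p(4) pq by simp
    fix i assume "i < n"
    then show "E (q ! i) (q ! Suc i)" using p(5)[rule_format, of "Suc i"] pq by simp
  qed (use q in auto)
  ultimately show "\<exists>z. E x z \<and> walk V E n z y" by blast
next
  assume "\<exists>z. E x z \<and> walk V E n z y"
  then obtain z q where e: "E x z" and q: "length q = Suc n" "hd q = z" "last q = y" "set q \<subseteq> V"
    "\<forall>i<n. E (q ! i) (q ! Suc i)"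
    unfolding walk_def by blast
  have xV: "x \<in> V" using sg e unfolding simple_graph_def by blast
  have qne: "q \<noteq> []" using q(1) by auto
  show "walk V E (Suc n) x y"
    unfolding walk_def
  proof (intro exI[of _ "x # q"] conjI allI impI)
    fix i assume i: "i < Suc n"
    show "E ((x # q) ! i) ((x # q) ! Suc i)"
    proof (cases i)
      case 0 then show ?thesis using e q(2) qne by (simp add: hd_conv_nth)
    next
      case (Suc j) then show ?thesis using q(5) i by simp
    qed
  qed (use q qne xV in auto)
qed

lemma walk_1: "simple_graph V E \<Longrightarrow> walk V E (Suc 0) x y \<longleftrightarrow> E x y"
  unfolding walk_Suc[of V E 0 x y] walk_0 by (auto simp: simple_graph_def)

context
  fixes V :: "'a set" and E
  assumes cg: "connected_graph V E"
begin

lemma sg: "simple_graph V E" using cg unfolding connected_graph_def by blast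

lemma Ein: "E x y \<Longrightarrow> x \<in> V \<and> y \<in> V" using sg unfolding simple_graph_def by blast
lemma Esym: "E x y \<Longrightarrow> E y x" using sg unfolding simple_graph_def by blast
lemma Eirr: "\<not> E x x" using sg unfolding simple_graph_def by blast
lemma finV: "finite V" using sg unfolding simple_graph_def by blast

lemma gdist_walk: "x \<in> V \<Longrightarrow> y \<in> V \<Longrightarrow> walk V E (gdist V E x y) x y"
  unfolding gdist_def using cg unfolding connected_graph_def by (meson LeastI_ex)

lemma gdist_le: "walk V E n x y \<Longrightarrow> gdist V E x y \<le> n"
  unfolding gdist_def by (rule Least_le)

lemma gdist_0: "x \<in> V \<Longrightarrow> gdist V E x x = 0"
  using gdist_le[of 0 x x] walk_0[of V E x x] by simp

lemma gdist_eq0: "x \<in> V \<Longrightarrow> y \<in> V \<Longrightarrow> gdist V E x y = 0 \<Longrightarrow> x = y"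
  using gdist_walk[of x y] walk_0 by metis

lemma gdist_1: "E x y \<Longrightarrow> gdist V E x y = 1"
proof -
  assume e: "E x y"
  have "gdist V E x y \<le> 1" using gdist_le[of 1 x y] walk_1[OF sg] e by simp
  moreover have "gdist V E x y \<noteq> 0" using gdist_eq0[of x y] Ein[OF e] Eirr e by blast
  ultimately show ?thesis by linarith
qed

lemma gdist_1D: "x \<in> V \<Longrightarrow> y \<in> V \<Longrightarrow> gdist V E x y = 1 \<Longrightarrow> E x y"
  using gdist_walk[of x y] walk_1[OF sg] by (metis One_nat_def)

lemma nbhd_mem: "b \<in> closed_nbhd V E u \<longleftrightarrow> b = u \<or> (b \<in> V \<and> E u b)"
  unfolding closed_nbhd_def by auto

lemma twin_le:
  assumes t: "closed_nbhd V E u = closed_nbhd V E v" and uV: "u \<in> V" and vV: "v \<in> V"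
    and xV: "x \<in> V" and xu: "x \<noteq> u" and xv: "x \<noteq> v"
  shows "gdist V E u x \<le> gdist V E v x"
proof -
  define n where "n = gdist V E v x"
  have w: "walk V E n v x" using gdist_walk[OF vV xV] n_def by simp
  show ?thesis
  proof (cases n)
    case 0 then show ?thesis using w walk_0 xv by metis
  next
    case (Suc m)
    then obtain b where eb: "E v b" and wb: "walk V E m b x" using w walk_Suc[OF sg] by blast
    have "b \<in> closed_nbhd V E u" using t eb Ein[OF eb] nbhd_mem by blast
    then have "b = u \<or> E u b" using nbhd_mem by blast
    then show ?thesis
    proof
      assume "b = u" then show ?thesis using gdist_le[OF wb] Suc n_def by simp
    next
      assume "E u b"
      then have "walk V E (Suc m) u x" using wb walk_Suc[OF sg] by blast
      then show ?thesis using gdist_le Suc n_def by metis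
    qed
  qed
qed

lemma twin_eq:
  assumes "closed_nbhd V E u = closed_nbhd V E v" "u \<in> V" "v \<in> V"
    "x \<in> V" "x \<noteq> u" "x \<noteq> v"
  shows "gdist V E u x = gdist V E v x"
  using twin_le[of u v x] twin_le[of v u x] assms by fastforce

lemma Lset_ends: "E a b \<Longrightarrow> a \<in> Lset V E a b \<and> b \<in> Lset V E a b"
  unfolding Lset_def using gdist_0 gdist_1 Esym Ein by fastforce

lemma Lset_twin:
  assumes "closed_nbhd V E u = closed_nbhd V E v" "u \<in> V" "v \<in> V"
  shows "Lset V E u v \<subseteq> {u, v}"
  unfolding Lset_def using twin_eq[OF assms] by auto

lemma Lset_nontwin:
  assumes e: "E a b" and nt: "closed_nbhd V E a \<noteq> closed_nbhd V E b"
  shows "\<exists>x. x \<in> Lset V E a b \<and> x \<noteq> a \<and> x \<noteq> b"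
proof -
  have aV: "a \<in> V" and bV: "b \<in> V" using Ein[OF e] by auto
  obtain x where "x \<in> closed_nbhd V E a \<longleftrightarrow> x \<notin> closed_nbhd V E b" using nt by blast
  then have x: "x \<in> V" "x \<noteq> a" "x \<noteq> b" "E a x \<longleftrightarrow> \<not> E b x"
    using nbhd_mem e Esym aV bV by metis+
  have "gdist V E a x \<noteq> gdist V E b x"
    using x gdist_1 gdist_1D aV bV by metis
  then show ?thesis using x unfolding Lset_def by blast
qed

end

context
  fixes V :: "'a set" and E
  assumes cg: "connected_graph V E"
begin

lemma lrf_bdd: "bdd_below {(\<Sum>v\<in>V. f v) | f. local_resolving_function V E f}"
  unfolding bdd_below_def local_resolving_function_def
  by (rule exI[of _ 0]) (auto intro!: sum_nonneg)

lemma sum_pair_le: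
  fixes f :: "'a \<Rightarrow> real"
  assumes "\<forall>x\<in>V. 0 \<le> f x" "p \<in> Lset V E a b" "q \<in> Lset V E a b" "p \<noteq> q"
  shows "f p + f q \<le> (\<Sum>x\<in>Lset V E a b. f x)"
proof -
  have fin: "finite (Lset V E a b)" using finV[OF cg] unfolding Lset_def by simp
  have "(\<Sum>x\<in>{p,q}. f x) \<le> (\<Sum>x\<in>Lset V E a b. f x)"
    by (rule sum_mono2[OF fin]) (use assms in \<open>auto simp: Lset_def\<close>)
  then show ?thesis using assms(4) by simp
qed

lemma i_imp_ii:
  assumes eq: "ldim_f V E = real (card V) / 2"
  shows "\<forall>u\<in>V. \<exists>v\<in>V. v \<noteq> u \<and> closed_nbhd V E u = closed_nbhd V E v"
proof (rule ccontr)
  assume "\<not> ?thesis"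
  then obtain u where uV: "u \<in> V" and nt: "\<And>v. v \<in> V \<Longrightarrow> v \<noteq> u \<Longrightarrow> closed_nbhd V E u \<noteq> closed_nbhd V E v"
    by blast
  define f :: "'a \<Rightarrow> real" where "f x = (if x = u then 0 else 1/2)" for x
  have f0: "\<forall>x\<in>V. 0 \<le> f x" by (simp add: f_def)
  have lrf: "local_resolving_function V E f"
    unfolding local_resolving_function_def
  proof (intro conjI allI impI)
    show "\<forall>x\<in>V. 0 \<le> f x \<and> f x \<le> 1" by (simp add: f_def)
    fix a b assume e: "E a b"
    have ab: "a \<noteq> b" using e Eirr[OF cg, of a] by auto
    have aV: "a \<in> V" and bV: "b \<in> V" using Ein[OF cg e] by auto
    have ends: "a \<in> Lset V E a b" "b \<in> Lset V E a b" using Lset_ends[OF cg e] by auto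
    show "1 \<le> (\<Sum>x\<in>Lset V E a b. f x)"
    proof (cases "a = u")
      case True
      then have "closed_nbhd V E a \<noteq> closed_nbhd V E b" using nt[OF bV] ab by auto
      then obtain x where x: "x \<in> Lset V E a b" "x \<noteq> a" "x \<noteq> b"
        using Lset_nontwin[OF cg e] by blast
      have "f b + f x \<le> (\<Sum>x\<in>Lset V E a b. f x)"
        by (rule sum_pair_le[OF f0 ends(2) x(1)]) (use x in auto)
      then show ?thesis using True ab x by (simp add: f_def)
    next
      case False
      show ?thesis
      proof (cases "b = u")
        case True
        have "closed_nbhd V E u \<noteq> closed_nbhd V E a" using nt[OF aV] False by blast
        then have "closed_nbhd V E a \<noteq> closed_nbhd V E b" using True by simp
        then obtain x where x: "x \<in> Lset V E a b" "x \<noteq> a" "x \<noteq> b"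
          using Lset_nontwin[OF cg e] by blast
        have "f a + f x \<le> (\<Sum>x\<in>Lset V E a b. f x)"
          by (rule sum_pair_le[OF f0 ends(1) x(1)]) (use x in auto)
        then show ?thesis using True False ab x by (simp add: f_def)
      next
        case False2: False
        have "f a + f b \<le> (\<Sum>x\<in>Lset V E a b. f x)"
          by (rule sum_pair_le[OF f0 ends]) (use ab in auto)
        then show ?thesis using False False2 by (simp add: f_def)
      qed
    qed
  qed
  have fin: "finite V" using finV[OF cg] .
  have "(\<Sum>x\<in>V. f x) = f u + (\<Sum>x\<in>V - {u}. f x)" using sum.remove[OF fin uV] by simp
  also have "\<dots> = (\<Sum>x\<in>V - {u}. 1/2)" by (auto simp: f_def intro!: sum.cong)
  also have "\<dots> = real (card V - 1) / 2" using uV fin by simp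
  finally have s: "(\<Sum>x\<in>V. f x) = real (card V - 1) / 2" .
  have "ldim_f V E \<le> (\<Sum>x\<in>V. f x)"
    unfolding ldim_f_def by (rule cInf_lower[OF _ lrf_bdd]) (use lrf in blast)
  moreover have "card V > 0" using uV fin card_gt_0_iff by blast
  ultimately show False using eq s by (simp add: of_nat_diff)
qed

lemma twin_pair:
  assumes lrf: "local_resolving_function V E f" and xV: "x \<in> V" and yV: "y \<in> V" and xy: "x \<noteq> y"
    and t: "closed_nbhd V E x = closed_nbhd V E y"
  shows "1 \<le> f x + f y"
proof -
  have "y \<in> closed_nbhd V E x" using t yV nbhd_mem[OF cg] by blast
  then have e: "E x y" using nbhd_mem[OF cg, of y x] xy by blast
  have f0: "\<forall>x\<in>V. 0 \<le> f x" using lrf unfolding local_resolving_function_def by blast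
  have "1 \<le> (\<Sum>z\<in>Lset V E x y. f z)" using lrf e unfolding local_resolving_function_def by blast
  also have "\<dots> \<le> (\<Sum>z\<in>{x,y}. f z)"
    by (rule sum_mono2) (use f0 xV yV Lset_twin[OF cg t xV yV] in auto)
  finally show ?thesis using xy by simp
qed

lemma ii_imp_i:
  assumes tw: "\<forall>u\<in>V. \<exists>v\<in>V. v \<noteq> u \<and> closed_nbhd V E u = closed_nbhd V E v"
  shows "ldim_f V E = real (card V) / 2"
  unfolding ldim_f_def
proof (rule cInf_eq_minimum)
  have fin: "finite V" using finV[OF cg] .
  have "local_resolving_function V E (\<lambda>_. 1/2)"
    unfolding local_resolving_function_def
  proof (intro conjI allI impI)
    fix a b assume e: "E a b"
    have ab: "a \<noteq> b" using e Eirr[OF cg, of a] by auto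
    have "(\<lambda>_. 1/2) a + (\<lambda>_. 1/2) b \<le> (\<Sum>x\<in>Lset V E a b. (\<lambda>_. 1/2::real) x)"
      by (rule sum_pair_le) (use Lset_ends[OF cg e] ab in auto)
    then show "1 \<le> (\<Sum>x\<in>Lset V E a b. 1/2::real)" by simp
  qed simp
  moreover have "(\<Sum>x\<in>V. (1/2::real)) = real (card V) / 2" by simp
  ultimately show "real (card V) / 2 \<in> {(\<Sum>v\<in>V. f v) | f. local_resolving_function V E f}"
    by (intro CollectI exI[of _ "\<lambda>_. 1/2"]) simp
next
  fix s assume "s \<in> {(\<Sum>v\<in>V. f v) | f. local_resolving_function V E f}"
  then obtain f where lrf: "local_resolving_function V E f" and s: "s = (\<Sum>v\<in>V. f v)" by blast
  have fin: "finite V" using finV[OF cg] .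
  obtain t where t: "\<And>x. x \<in> V \<Longrightarrow> t x \<in> V \<and> t x \<noteq> x \<and> closed_nbhd V E x = closed_nbhd V E (t x)"
  proof -
    have ex: "\<forall>x\<in>V. \<exists>v. v \<in> V \<and> v \<noteq> x \<and> closed_nbhd V E x = closed_nbhd V E v" using tw by blast
    obtain t0 where t0: "\<forall>x\<in>V. t0 x \<in> V \<and> t0 x \<noteq> x \<and> closed_nbhd V E x = closed_nbhd V E (t0 x)"
      using bchoice[OF ex] by blast
    show ?thesis by (rule that[of t0]) (use t0 in blast)
  qed
  define g where "g x = f x - 1/2" for x
  define N where "N = {x\<in>V. f x < 1/2}"
  have NV: "N \<subseteq> V" unfolding N_def by blast
  have finN: "finite N" using fin NV finite_subset by blast
  have inj: "inj_on t N"
  proof (rule inj_onI)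
    fix x y assume x: "x \<in> N" and y: "y \<in> N" and txy: "t x = t y"
    show "x = y"
    proof (rule ccontr)
      assume "x \<noteq> y"
      moreover have "closed_nbhd V E x = closed_nbhd V E y" using t[of x] t[of y] x y NV txy by auto
      ultimately have "1 \<le> f x + f y" using twin_pair[OF lrf] x y NV by blast
      then show False using x y unfolding N_def by simp
    qed
  qed
  have tN: "t ` N \<subseteq> V - N"
  proof
    fix z assume "z \<in> t ` N"
    then obtain x where x: "x \<in> N" and z: "z = t x" by blast
    have xV: "x \<in> V" using x NV by blast
    have tx: "t x \<in> V" "x \<noteq> t x" "closed_nbhd V E x = closed_nbhd V E (t x)" using t[OF xV] by auto
    have "1 \<le> f x + f (t x)" by (rule twin_pair[OF lrf xV tx])
    then show "z \<in> V - N" using x z t[of x] NV unfolding N_def by auto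
  qed
  have g0: "\<And>x. x \<in> V - N \<Longrightarrow> 0 \<le> g x" unfolding g_def N_def by auto
  have s1: "(\<Sum>x\<in>V. g x) = (\<Sum>x\<in>N. g x) + (\<Sum>x\<in>V - N. g x)"
    using sum.subset_diff[OF NV fin, of g] by (simp add: add.commute)
  have s2: "(\<Sum>x\<in>V - N. g x) \<ge> (\<Sum>x\<in>t ` N. g x)"
    by (rule sum_mono2) (use fin tN g0 in auto)
  have s3: "(\<Sum>x\<in>t ` N. g x) = (\<Sum>x\<in>N. g (t x))" using sum.reindex[OF inj] by simp
  have "(\<Sum>x\<in>V. g x) \<ge> (\<Sum>x\<in>N. g x + g (t x))"
    using s1 s2 s3 by (simp add: sum.distrib)
  moreover have "(\<Sum>x\<in>N. g x + g (t x)) \<ge> 0"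
  proof (rule sum_nonneg)
    fix x assume x: "x \<in> N"
    have xV: "x \<in> V" using x NV by blast
    have tx: "t x \<in> V" "x \<noteq> t x" "closed_nbhd V E x = closed_nbhd V E (t x)" using t[OF xV] by auto
    have "1 \<le> f x + f (t x)" by (rule twin_pair[OF lrf xV tx])
    then show "0 \<le> g x + g (t x)" unfolding g_def by simp
  qed
  moreover have "(\<Sum>x\<in>V. g x) = (\<Sum>x\<in>V. f x) - real (card V) / 2"
    unfolding g_def by (simp add: sum_subtractf)
  ultimately show "real (card V) / 2 \<le> s" using s by linarith
qed

end




lemma iii_imp_ii:
  assumes cg: "connected_graph V E"
    and cpl: "\<forall>v\<in>VH. complete_graph (fst (I v)) (snd (I v)) \<and> card (fst (I v)) \<ge> 2"
    and hg: "connected_graph VH EH"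
    and iso: "graph_iso V E (glex_verts VH I) (glex_edge VH EH I)"
  shows "\<forall>u\<in>V. \<exists>v\<in>V. v \<noteq> u \<and> closed_nbhd V E u = closed_nbhd V E v"
proof
  fix u assume uV: "u \<in> V"
  obtain \<phi> where bij: "bij_betw \<phi> V (glex_verts VH I)"
    and ed: "\<And>x y. x \<in> V \<Longrightarrow> y \<in> V \<Longrightarrow> E x y \<longleftrightarrow> glex_edge VH EH I (\<phi> x) (\<phi> y)"
    using iso unfolding graph_iso_def by blast
  have EHirr: "\<And>i. \<not> EH i i" using hg unfolding connected_graph_def simple_graph_def by blast
  obtain i w where phu: "\<phi> u = (i, w)" by (cases "\<phi> u")
  have "\<phi> u \<in> glex_verts VH I" using bij uV bij_betwE by blast
  then have iVH: "i \<in> VH" and wI: "w \<in> fst (I i)" using phu unfolding glex_verts_def by auto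
  have cp: "complete_graph (fst (I i)) (snd (I i))" and c2: "card (fst (I i)) \<ge> 2"
    using cpl iVH by auto
  have finI: "finite (fst (I i))" using c2 card.infinite by fastforce
  obtain w' where w'I: "w' \<in> fst (I i)" and ww': "w' \<noteq> w"
  proof -
    have "\<not> fst (I i) \<subseteq> {w}"
    proof
      assume "fst (I i) \<subseteq> {w}"
      then have "card (fst (I i)) \<le> card {w}" by (intro card_mono) auto
      then show False using c2 by simp
    qed
    then show ?thesis using that by blast
  qed
  have "(i, w') \<in> glex_verts VH I" using iVH w'I unfolding glex_verts_def by auto
  moreover have "\<phi> ` V = glex_verts VH I" using bij unfolding bij_betw_def by blast
  ultimately obtain v where vV: "v \<in> V" and phv: "\<phi> v = (i, w')"
    by (metis imageE)
  have vu: "v \<noteq> u" using phu phv ww' by auto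
  have inj: "inj_on \<phi> V" using bij bij_betw_def by blast
  have key: "\<And>x w0. x \<in> V \<Longrightarrow> w0 \<in> fst (I i) \<Longrightarrow> \<phi> x \<noteq> (i, w0) \<Longrightarrow>
     glex_edge VH EH I (i, w0) (\<phi> x) \<longleftrightarrow> (EH i (fst (\<phi> x)) \<or> fst (\<phi> x) = i)"
  proof -
    fix x w0 assume xV: "x \<in> V" and w0: "w0 \<in> fst (I i)" and ne: "\<phi> x \<noteq> (i, w0)"
    have px: "\<phi> x \<in> glex_verts VH I" using bij xV bij_betwE by blast
    then have "snd (\<phi> x) \<in> fst (I (fst (\<phi> x)))" unfolding glex_verts_def by auto
    moreover have "(i, w0) \<in> glex_verts VH I" using iVH w0 unfolding glex_verts_def by auto
    moreover have "fst (\<phi> x) = i \<Longrightarrow> snd (\<phi> x) \<noteq> w0" using ne by (cases "\<phi> x") auto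
    ultimately show "glex_edge VH EH I (i, w0) (\<phi> x) \<longleftrightarrow> (EH i (fst (\<phi> x)) \<or> fst (\<phi> x) = i)"
      using px cp w0 unfolding glex_edge_def complete_graph_def by auto
  qed
  have "\<And>x. x \<in> closed_nbhd V E u \<longleftrightarrow> x \<in> closed_nbhd V E v"
  proof -
    fix x
    show "x \<in> closed_nbhd V E u \<longleftrightarrow> x \<in> closed_nbhd V E v"
    proof (cases "x \<in> V")
      case False then show ?thesis using uV vV unfolding closed_nbhd_def by auto
    next
      case xV: True
      have eu: "E u x \<longleftrightarrow> (EH i (fst (\<phi> x)) \<or> fst (\<phi> x) = i)" if xu: "x \<noteq> u"
      proof -
        have "\<phi> x \<noteq> \<phi> u" using inj_on_eq_iff[OF inj xV uV] xu by simp
        then show ?thesis using ed[OF uV xV] key[OF xV wI] phu by simp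
      qed
      have ev: "E v x \<longleftrightarrow> (EH i (fst (\<phi> x)) \<or> fst (\<phi> x) = i)" if xv: "x \<noteq> v"
      proof -
        have "\<phi> x \<noteq> \<phi> v" using inj_on_eq_iff[OF inj xV vV] xv by simp
        then show ?thesis using ed[OF vV xV] key[OF xV w'I] phv by simp
      qed
      have "fst (\<phi> u) = i" "fst (\<phi> v) = i" using phu phv by auto
      then show ?thesis using eu ev xV vu unfolding closed_nbhd_def by auto
    qed
  qed
  then show "\<exists>v\<in>V. v \<noteq> u \<and> closed_nbhd V E u = closed_nbhd V E v" using vV vu by blast
qed



lemma ii_imp_iii:
  fixes V :: "'a set" and E
  assumes cg: "connected_graph V E"
    and tw: "\<forall>u\<in>V. \<exists>v\<in>V. v \<noteq> u \<and> closed_nbhd V E u = closed_nbhd V E v"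
  shows "\<exists>(VH :: nat set) EH (I :: nat \<Rightarrow> nat set \<times> (nat \<Rightarrow> nat \<Rightarrow> bool)).
               connected_graph VH EH \<and>
               (\<forall>v\<in>VH. complete_graph (fst (I v)) (snd (I v)) \<and> card (fst (I v)) \<ge> 2) \<and>
               graph_iso V E (glex_verts VH I) (glex_edge VH EH I)"
proof -
  have fin: "finite V" using finV[OF cg] .
  obtain h :: "'a \<Rightarrow> nat" and k where "h ` V = {i. i < k}" and inj: "inj_on h V"
    using finite_imp_inj_to_nat_seg[OF fin] by blast
  define N where "N = closed_nbhd V E"
  define rep where "rep x = Min (h ` {y\<in>V. N x = N y})" for x
  have rep_ex: "\<exists>y\<in>V. N x = N y \<and> rep x = h y" if xV: "x \<in> V" for x
  proof -
    have "rep x \<in> h ` {y\<in>V. N x = N y}" unfolding rep_def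
      by (rule Min_in) (use fin xV in auto)
    then show ?thesis by blast
  qed
  have rep_eq: "N x = N y \<Longrightarrow> rep x = rep y" for x y unfolding rep_def by simp
  have rep_eqD: "x \<in> V \<Longrightarrow> y \<in> V \<Longrightarrow> rep x = rep y \<Longrightarrow> N x = N y" for x y
  proof -
    assume xV: "x \<in> V" and yV: "y \<in> V" and r: "rep x = rep y"
    obtain x' where x': "x' \<in> V" "N x = N x'" "rep x = h x'" using rep_ex[OF xV] by blast
    obtain y' where y': "y' \<in> V" "N y = N y'" "rep y = h y'" using rep_ex[OF yV] by blast
    have "x' = y'" using inj x' y' r inj_onD by metis
    then show "N x = N y" using x' y' by simp
  qed
  have nmem: "b \<in> N u \<longleftrightarrow> b = u \<or> (b \<in> V \<and> E u b)" for b u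
    unfolding N_def using nbhd_mem[OF cg] by blast
  have respect: "E x' y'" if "x \<in> V" "y \<in> V" "x' \<in> V" "y' \<in> V" "N x = N x'" "N y = N y'"
     "N x \<noteq> N y" "E x y" for x y x' y'
  proof -
    have "y \<in> N x'" using that nmem by metis
    then have "y = x' \<or> E x' y" using nmem by blast
    then have e1: "E x' y" using that by metis
    then have "x' \<in> N y'" using that nmem Esym[OF cg] by metis
    then have "x' = y' \<or> E y' x'" using nmem by blast
    then show "E x' y'" using that Esym[OF cg] by metis
  qed
  have twinE: "x \<in> V \<Longrightarrow> y \<in> V \<Longrightarrow> N x = N y \<Longrightarrow> x \<noteq> y \<Longrightarrow> E x y" for x y
    using nmem by metis
  define VH where "VH = rep ` V"
  define EH where "EH i j \<longleftrightarrow> i \<in> VH \<and> j \<in> VH \<and> i \<noteq> j \<and> (\<exists>x\<in>V. \<exists>y\<in>V. rep x = i \<and> rep y = j \<and> E x y)" for i j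
  define C where "C i = h ` {y\<in>V. rep y = i}" for i
  define I where "I i = (C i, \<lambda>a b. a \<in> C i \<and> b \<in> C i \<and> a \<noteq> b)" for i
  define \<phi> where "\<phi> x = (rep x, h x)" for x
  have EH_iff: "EH (rep x) (rep y) \<longleftrightarrow> N x \<noteq> N y \<and> E x y" if xV: "x \<in> V" and yV: "y \<in> V" for x y
  proof
    assume "EH (rep x) (rep y)"
    then obtain x' y' where "x' \<in> V" "y' \<in> V" "rep x' = rep x" "rep y' = rep y" "E x' y'" "rep x \<noteq> rep y"
      unfolding EH_def by metis
    then show "N x \<noteq> N y \<and> E x y" using respect[of x' y' x y] rep_eqD rep_eq xV yV by metis
  next
    assume "N x \<noteq> N y \<and> E x y"
    then show "EH (rep x) (rep y)" unfolding EH_def VH_def using xV yV rep_eqD by blast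
  qed
  have sgH: "simple_graph VH EH"
    unfolding simple_graph_def
  proof (intro conjI allI impI)
    show "finite VH" unfolding VH_def using fin by simp
  next
    fix i j assume "EH i j"
    then show "EH j i" unfolding EH_def using Esym[OF cg] by metis
  qed (auto simp: EH_def)
  have wH: "\<And>x. walk V E n x y \<Longrightarrow> \<exists>m. walk VH EH m (rep x) (rep y)" for n y
  proof (induction n)
    case 0
    then have "x = y" "x \<in> V" using walk_0 by metis+
    then have "walk VH EH 0 (rep x) (rep y)" using walk_0 unfolding VH_def by fastforce
    then show ?case by blast
  next
    case (Suc n)
    then obtain z where e: "E x z" and w: "walk V E n z y" using walk_Suc[OF sg[OF cg]] by blast
    obtain m where wm: "walk VH EH m (rep z) (rep y)" using Suc.IH[OF w] by blast
    show ?case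
    proof (cases "rep x = rep z")
      case True then show ?thesis using wm by metis
    next
      case False
      have "EH (rep x) (rep z)" using EH_iff Ein[OF cg e] e rep_eq False by metis
      then have "walk VH EH (Suc m) (rep x) (rep y)" using walk_Suc[OF sgH] wm by blast
      then show ?thesis by blast
    qed
  qed
  have conH: "connected_graph VH EH"
    unfolding connected_graph_def
  proof (intro conjI ballI)
    show "VH \<noteq> {}" using cg unfolding VH_def connected_graph_def by blast
    fix i j assume "i \<in> VH" "j \<in> VH"
    then obtain x y where "x \<in> V" "y \<in> V" "i = rep x" "j = rep y" unfolding VH_def by blast
    then show "\<exists>n. walk VH EH n i j" using wH cg unfolding connected_graph_def by blast
  qed (rule sgH)
  have cpl: "\<forall>v\<in>VH. complete_graph (fst (I v)) (snd (I v)) \<and> card (fst (I v)) \<ge> 2"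
  proof
    fix i assume "i \<in> VH"
    then obtain x where xV: "x \<in> V" and i: "i = rep x" unfolding VH_def by blast
    obtain y where yV: "y \<in> V" "y \<noteq> x" "N x = N y" using tw xV unfolding N_def by blast
    have finC: "finite (C i)" unfolding C_def using fin by simp
    have "{h x, h y} \<subseteq> C i" unfolding C_def using xV yV(1) i rep_eq[OF yV(3)] by auto
    moreover have "h x \<noteq> h y" using inj xV yV inj_onD by metis
    ultimately have "2 \<le> card (C i)"
      using card_mono[OF finC, of "{h x, h y}"] by simp
    then show "complete_graph (fst (I i)) (snd (I i)) \<and> card (fst (I i)) \<ge> 2"
      unfolding complete_graph_def simple_graph_def I_def using finC by auto
  qed
  have bij: "bij_betw \<phi> V (glex_verts VH I)"
    unfolding bij_betw_def
  proof
    show "inj_on \<phi> V" using inj unfolding \<phi>_def inj_on_def by auto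
    show "\<phi> ` V = glex_verts VH I"
    proof (rule set_eqI)
      fix p :: "nat \<times> nat"
      show "p \<in> \<phi> ` V \<longleftrightarrow> p \<in> glex_verts VH I"
      proof
        assume "p \<in> \<phi> ` V" then show "p \<in> glex_verts VH I"
          unfolding glex_verts_def \<phi>_def VH_def I_def C_def by auto
      next
        assume "p \<in> glex_verts VH I"
        then obtain y where y: "y \<in> V" "p = (rep y, h y)"
          unfolding glex_verts_def VH_def I_def C_def by auto
        then show "p \<in> \<phi> ` V" unfolding \<phi>_def by blast
      qed
    qed
  qed
  have edges: "\<forall>x\<in>V. \<forall>y\<in>V. E x y \<longleftrightarrow> glex_edge VH EH I (\<phi> x) (\<phi> y)"
  proof (intro ballI)
    fix x y assume xV: "x \<in> V" and yV: "y \<in> V"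
    have inV: "\<phi> x \<in> glex_verts VH I" "\<phi> y \<in> glex_verts VH I" using bij xV yV bij_betwE by blast+
    have hxy: "h x = h y \<longleftrightarrow> x = y" using inj xV yV inj_onD by metis
    have "glex_edge VH EH I (\<phi> x) (\<phi> y) \<longleftrightarrow>
          (N x \<noteq> N y \<and> E x y) \<or> (rep x = rep y \<and> x \<noteq> y)"
      using inV EH_iff[OF xV yV] hxy xV yV
      unfolding glex_edge_def \<phi>_def I_def C_def by auto
    also have "\<dots> \<longleftrightarrow> E x y"
      using rep_eq rep_eqD[OF xV yV] twinE[OF xV yV] Eirr[OF cg] by metis
    finally show "E x y \<longleftrightarrow> glex_edge VH EH I (\<phi> x) (\<phi> y)" by simp
  qed
  show ?thesis
    using conH cpl bij edges unfolding graph_iso_def by blast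
qed

theorem theorem2p3:
  fixes V :: "'a set" and E :: "'a \<Rightarrow> 'a \<Rightarrow> bool"
  assumes "connected_graph V E" and "card V \<ge> 2"
  shows "(ldim_f V E = real (card V) / 2 \<longleftrightarrow>
            (\<forall>u\<in>V. \<exists>v\<in>V. v \<noteq> u \<and> closed_nbhd V E u = closed_nbhd V E v))
       \<and> ((\<forall>u\<in>V. \<exists>v\<in>V. v \<noteq> u \<and> closed_nbhd V E u = closed_nbhd V E v) \<longleftrightarrow>
            (\<exists>(VH :: nat set) EH (I :: nat \<Rightarrow> nat set \<times> (nat \<Rightarrow> nat \<Rightarrow> bool)).
               connected_graph VH EH \<and>
               (\<forall>v\<in>VH. complete_graph (fst (I v)) (snd (I v)) \<and> card (fst (I v)) \<ge> 2) \<and>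
               graph_iso V E (glex_verts VH I) (glex_edge VH EH I)))"
proof -
  have a: "ldim_f V E = real (card V) / 2 \<longleftrightarrow>
            (\<forall>u\<in>V. \<exists>v\<in>V. v \<noteq> u \<and> closed_nbhd V E u = closed_nbhd V E v)"
    using i_imp_ii[OF assms(1)] ii_imp_i[OF assms(1)] by blast
  show ?thesis
    using a ii_imp_iii[OF assms(1)] iii_imp_ii[OF assms(1)] by blast
qed

end
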